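(* Let $(x_i,y_i)_{i=1}^n$ be i.i.d. from a coupling $\hat\pi$ of $\alpha,\beta$. Let $\pi$ be a coupling of $\alpha,\beta$ with bounded density $p=\frac{d\pi}{d(\alpha\otimes\beta)}$, and $P=\frac1{n^2}(p(x_i,y_j))_{i,j=1}^n$. Then $\mathbb E\|\hat\Phi_n^*P-\Phi^*(p\,\alpha\otimes\beta)\|^2=O(n^{-1})$, and there is a constant $c$ (independent of $n,t$) such that for every $t>0$, with probability at least $1-2\exp(-2t^2/(64\|p\|_\infty^2))$, $$\|\hat\Phi_n^*P-\Phi^*(p\,\alpha\otimes\beta)\|\le c\,\frac{1+t}{\sqrt n}.$$
   Context: $\mathcal X,\mathcal Y$ compact metric spaces, $\alpha\in\mathcal P(\mathcal X)$, $\beta\in\mathcal P(\mathcal Y)$, $\mathbf C=(\mathbf C_1,\dots,\mathbf C_s):\mathcal X\times\mathcal Y\to\mathbb{R}^s$ continuous with $\|\mathbf C(x,y)\|\le1$. $\Phi^*\mu=(\int\mathbf C_kd\mu)_{k=1}^s$ for a measure $\mu$; for $P\in\mathbb{R}^{n\times n}$, $\hat\Phi_n^*P=\sum_{i,j}\mathbf C(x_i,y_j)P_{ij}\in\mathbb{R}^s$ (uncentered). $\|\cdot\|$ is the Euclidean norm on $\mathbb{R}^s$. *)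

theory Defs
  imports "HOL-Probability.Probability" "HOL-Library.Landau_Symbols"
begin

definition is_coupling :: "'a measure \<Rightarrow> 'b measure \<Rightarrow> ('a \<times> 'b) measure \<Rightarrow> bool" where
  "is_coupling \<alpha> \<beta> \<pi> \<longleftrightarrow> prob_space \<pi> \<and> sets \<pi> = sets (\<alpha> \<Otimes>\<^sub>M \<beta>)
     \<and> distr \<pi> \<alpha> fst = \<alpha> \<and> distr \<pi> \<beta> snd = \<beta>"

definition Phi_hat_star_P :: "('a \<times> 'b \<Rightarrow> real^'s) \<Rightarrow> ('a \<times> 'b \<Rightarrow> real) \<Rightarrow> nat \<Rightarrow> (nat \<Rightarrow> 'a \<times> 'b) \<Rightarrow> real^'s" where
  "Phi_hat_star_P C p n \<omega> =
     (\<Sum>i<n. \<Sum>j<n. (p (fst (\<omega> i), snd (\<omega> j)) / (real n)^2) *\<^sub>R C (fst (\<omega> i), snd (\<omega> j)))"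

definition Phi_star_density :: "('a \<times> 'b \<Rightarrow> real^'s) \<Rightarrow> ('a \<times> 'b) measure \<Rightarrow> ('a \<times> 'b \<Rightarrow> real) \<Rightarrow> real^'s" where
  "Phi_star_density C M p = (\<chi> k. integral\<^sup>L M (\<lambda>z. p z * C z $ k))"

end

theory Submission
  imports Defs
begin

lemma sq_le: "\<bar>a::real\<bar> \<le> K \<Longrightarrow> norm (a\<^sup>2) \<le> K\<^sup>2"
  using power_mono[of "\<bar>a\<bar>" K 2] by simp

lemma sq_le': "\<bar>a::real\<bar> \<le> K \<Longrightarrow> a\<^sup>2 \<le> K\<^sup>2"
  using power_mono[of "\<bar>a\<bar>" K 2] by simp

lemma single_var:
  fixes N :: "'b measure" and h :: "'b \<Rightarrow> real"
  assumes P: "prob_space N" and hm: "h \<in> borel_measurable N"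
    and hK: "\<And>y. y \<in> space N \<Longrightarrow> \<bar>h y\<bar> \<le> K"
    and hd: "\<And>y y'. y \<in> space N \<Longrightarrow> y' \<in> space N \<Longrightarrow> \<bar>h y - h y'\<bar> \<le> c"
  shows "\<And>y. y \<in> space N \<Longrightarrow> \<bar>h y - integral\<^sup>L N h\<bar> \<le> c"
    and "integral\<^sup>L N (\<lambda>y. (h y)\<^sup>2) \<le> (integral\<^sup>L N h)\<^sup>2 + c\<^sup>2"
    and "l > 0 \<Longrightarrow> (\<integral>\<^sup>+y. ennreal (exp (l * h y)) \<partial>N)
           \<le> ennreal (exp (l * integral\<^sup>L N h)) * ennreal (exp (l\<^sup>2 * c\<^sup>2 / 2))"
proof -
  interpret prob_space N by (rule P)
  have int: "integrable N h"
    by (rule integrable_const_bound[where B=K]) (use hK hm in auto)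
  have int2: "integrable N (\<lambda>y. (h y)\<^sup>2)"
    by (rule integrable_const_bound[where B="K\<^sup>2"])
       (use hm in \<open>auto intro!: AE_I2 sq_le sq_le' hK\<close>)
  let ?m = "integral\<^sup>L N h"
  show A: "\<bar>h y - ?m\<bar> \<le> c" if y: "y \<in> space N" for y
  proof -
    have "?m \<le> integral\<^sup>L N (\<lambda>_. h y + c)"
      by (rule integral_mono[OF int]) (auto dest!: hd[OF y] simp: abs_le_iff)
    moreover have "integral\<^sup>L N (\<lambda>_. h y - c) \<le> ?m"
      by (rule integral_mono[OF _ int]) (auto dest!: hd[OF y] simp: abs_le_iff)
    ultimately show ?thesis by (simp add: prob_space abs_le_iff)
  qed
  have "integral\<^sup>L N (\<lambda>y. (h y - ?m)\<^sup>2) = integral\<^sup>L N (\<lambda>y. (h y)\<^sup>2 - 2 * ?m * h y + ?m\<^sup>2)"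
    by (rule Bochner_Integration.integral_cong) (simp_all add: power2_diff)
  also have "\<dots> = integral\<^sup>L N (\<lambda>y. (h y)\<^sup>2 - 2 * ?m * h y) + ?m\<^sup>2"
    using int int2 by (subst Bochner_Integration.integral_add) (auto simp: prob_space)
  also have "integral\<^sup>L N (\<lambda>y. (h y)\<^sup>2 - 2 * ?m * h y) = integral\<^sup>L N (\<lambda>y. (h y)\<^sup>2) - 2 * ?m * ?m"
    using int int2 by (subst Bochner_Integration.integral_diff) auto
  finally have "integral\<^sup>L N (\<lambda>y. (h y - ?m)\<^sup>2) = integral\<^sup>L N (\<lambda>y. (h y)\<^sup>2) - ?m\<^sup>2"
    by (simp add: power2_eq_square)
  then have eq: "integral\<^sup>L N (\<lambda>y. (h y)\<^sup>2) = ?m\<^sup>2 + integral\<^sup>L N (\<lambda>y. (h y - ?m)\<^sup>2)" by simp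
  have "integral\<^sup>L N (\<lambda>y. (h y - ?m)\<^sup>2) \<le> integral\<^sup>L N (\<lambda>_. c\<^sup>2)"
  proof (rule integral_mono)
    show "integrable N (\<lambda>y. (h y - ?m)\<^sup>2)"
      using int int2 by (simp add: power2_diff)
    fix y assume "y \<in> space N"
    then show "(h y - ?m)\<^sup>2 \<le> c\<^sup>2" using A sq_le' by blast
  qed simp
  then show "integral\<^sup>L N (\<lambda>y. (h y)\<^sup>2) \<le> ?m\<^sup>2 + c\<^sup>2" using eq by (simp add: prob_space)
  assume l: "l > 0"
  interpret ib: interval_bounded_random_variable N h "?m - c" "?m + c"
  proof unfold_locales
    show "random_variable borel h" by (rule hm)
    show "AE x in N. h x \<in> {?m - c..?m + c}"
    proof (rule AE_I2)
      fix x assume "x \<in> space N"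
      from A[OF this] show "h x \<in> {?m - c..?m + c}" by (simp add: abs_le_iff)
    qed
  qed
  have H: "(\<integral>\<^sup>+y. ennreal (exp (l * (h y - ?m))) \<partial>N) \<le> ennreal (exp (l\<^sup>2 * ((?m + c) - (?m - c))\<^sup>2 / 8))"
    by (rule ib.Hoeffdings_lemma_nn_integral[OF l])
  have "(\<integral>\<^sup>+y. ennreal (exp (l * h y)) \<partial>N) = (\<integral>\<^sup>+y. ennreal (exp (l * ?m)) * ennreal (exp (l * (h y - ?m))) \<partial>N)"
  proof (intro nn_integral_cong)
    fix y
    have "exp (l * h y) = exp (l * ?m) * exp (l * (h y - ?m))"
      by (simp add: exp_add[symmetric] right_diff_distrib)
    then show "ennreal (exp (l * h y)) = ennreal (exp (l * ?m)) * ennreal (exp (l * (h y - ?m)))"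
      by (simp add: ennreal_mult)
  qed
  also have "\<dots> = ennreal (exp (l * ?m)) * (\<integral>\<^sup>+y. ennreal (exp (l * (h y - ?m))) \<partial>N)"
    by (rule nn_integral_cmult) (use hm in simp)
  also have "\<dots> \<le> ennreal (exp (l * ?m)) * ennreal (exp (l\<^sup>2 * ((?m + c) - (?m - c))\<^sup>2 / 8))"
    by (rule mult_left_mono[OF H]) simp
  also have "l\<^sup>2 * ((?m + c) - (?m - c))\<^sup>2 / 8 = l\<^sup>2 * c\<^sup>2 / 2"
    by (simp add: power2_eq_square algebra_simps)
  finally show "(\<integral>\<^sup>+y. ennreal (exp (l * h y)) \<partial>N)
           \<le> ennreal (exp (l * integral\<^sup>L N h)) * ennreal (exp (l\<^sup>2 * c\<^sup>2 / 2))" .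
qed

lemma bnd_int:
  fixes h :: "'b \<Rightarrow> real"
  assumes "prob_space N" "h \<in> borel_measurable N" "\<And>y. y \<in> space N \<Longrightarrow> \<bar>h y\<bar> \<le> K"
  shows "integrable N h"
proof -
  interpret prob_space N by fact
  show ?thesis
    by (rule integrable_const_bound[where B=K]) (use assms in auto)
qed

lemma bnd_integral:
  fixes h :: "'b \<Rightarrow> real"
  assumes "prob_space N" "h \<in> borel_measurable N" "\<And>y. y \<in> space N \<Longrightarrow> \<bar>h y\<bar> \<le> K"
  shows "\<bar>integral\<^sup>L N h\<bar> \<le> K"
proof -
  interpret prob_space N by fact
  have i: "integrable N h" by (rule bnd_int[OF assms])
  have "integral\<^sup>L N h \<le> integral\<^sup>L N (\<lambda>_. K)"
  proof (rule integral_mono[OF i])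
    fix x assume "x \<in> space N"
    from assms(3)[OF this] show "h x \<le> K" by (simp add: abs_le_iff)
  qed simp
  moreover have "integral\<^sup>L N (\<lambda>_. -K) \<le> integral\<^sup>L N h"
  proof (rule integral_mono[OF _ i])
    fix x assume "x \<in> space N"
    from assms(3)[OF this] show "-K \<le> h x" by (simp add: abs_le_iff)
  qed simp
  ultimately show ?thesis by (simp add: prob_space abs_le_iff)
qed

definition bdd_diff :: "('i \<Rightarrow> 'a measure) \<Rightarrow> 'i set \<Rightarrow> (('i \<Rightarrow> 'a) \<Rightarrow> real) \<Rightarrow> real \<Rightarrow> bool" where
  "bdd_diff M I f c \<longleftrightarrow> (\<forall>x\<in>space (PiM I M). \<forall>y\<in>space (PiM I M). \<forall>i\<in>I.
      (\<forall>j\<in>I-{i}. x j = y j) \<longrightarrow> \<bar>f x - f y\<bar> \<le> c)"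

lemma bdd_diffD:
  assumes "bdd_diff M I f c" "x \<in> space (PiM I M)" "y \<in> space (PiM I M)" "i \<in> I"
    "\<And>j. j \<in> I \<Longrightarrow> j \<noteq> i \<Longrightarrow> x j = y j"
  shows "\<bar>f x - f y\<bar> \<le> c"
  using assms unfolding bdd_diff_def by blast

lemma bdd_diffI:
  assumes "\<And>x y i. x \<in> space (PiM I M) \<Longrightarrow> y \<in> space (PiM I M) \<Longrightarrow> i \<in> I \<Longrightarrow>
    (\<And>j. j \<in> I \<Longrightarrow> j \<noteq> i \<Longrightarrow> x j = y j) \<Longrightarrow> \<bar>f x - f y\<bar> \<le> c"
  shows "bdd_diff M I f c"
  using assms unfolding bdd_diff_def by blast

lemma upd_in_space_PiM:
  "x \<in> space (PiM I M) \<Longrightarrow> y \<in> space (M i) \<Longrightarrow> x(i:=y) \<in> space (PiM (insert i I) M)"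
  by (auto simp: space_PiM PiE_def extensional_def Pi_iff)

context product_prob_space
begin

lemma bdd_diff_step:
  assumes J: "finite J" "i \<notin> J"
    and fm: "f \<in> borel_measurable (PiM (insert i J) M)"
    and fK': "\<forall>x\<in>space (PiM (insert i J) M). \<bar>f x\<bar> \<le> K"
    and fd: "bdd_diff M (insert i J) f c"
  defines "g \<equiv> (\<lambda>x. \<integral>y. f (x(i:=y)) \<partial>M i)"
  shows "g \<in> borel_measurable (PiM J M)"
    and "\<And>x. x \<in> space (PiM J M) \<Longrightarrow> \<bar>g x\<bar> \<le> K"
    and "bdd_diff M J g c"
    and "\<And>x. x \<in> space (PiM J M) \<Longrightarrow> (\<lambda>y. f (x(i:=y))) \<in> borel_measurable (M i)"
    and "\<And>x y. x \<in> space (PiM J M) \<Longrightarrow> y \<in> space (M i) \<Longrightarrow> \<bar>f (x(i:=y))\<bar> \<le> K"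
    and "\<And>x y y'. x \<in> space (PiM J M) \<Longrightarrow> y \<in> space (M i) \<Longrightarrow> y' \<in> space (M i) \<Longrightarrow>
            \<bar>f (x(i:=y)) - f (x(i:=y'))\<bar> \<le> c"
    and "integral\<^sup>L (PiM (insert i J) M) f = integral\<^sup>L (PiM J M) g"
proof -
  have fK: "\<And>x. x \<in> space (PiM (insert i J) M) \<Longrightarrow> \<bar>f x\<bar> \<le> K" using fK' by blast
  have Pi: "prob_space (M i)" by (rule prob_space)
  have PJ: "prob_space (PiM J M)" by (rule prob_space_PiM) (rule prob_space)
  have PIJ: "prob_space (PiM (insert i J) M)" by (rule prob_space_PiM) (rule prob_space)
  have fm2: "(\<lambda>(x, y). f (x(i:=y))) \<in> borel_measurable (PiM J M \<Otimes>\<^sub>M M i)"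
    using measurable_comp[OF measurable_add_dim fm] by (simp add: comp_def case_prod_unfold)
  show "g \<in> borel_measurable (PiM J M)"
    unfolding g_def using sigma_finite_measure.borel_measurable_lebesgue_integral[OF sigma_finite_measures[of i], of "\<lambda>x y. f (x(i:=y))" "PiM J M"] fm2
    by simp
  show hm: "(\<lambda>y. f (x(i:=y))) \<in> borel_measurable (M i)" if "x \<in> space (PiM J M)" for x
    using measurable_comp[OF measurable_component_update fm, OF that J(2)] by (simp add: comp_def fun_upd_def)
  show hK: "\<bar>f (x(i:=y))\<bar> \<le> K" if "x \<in> space (PiM J M)" "y \<in> space (M i)" for x y
    by (rule fK[OF upd_in_space_PiM[OF that]])
  show "\<bar>g x\<bar> \<le> K" if x: "x \<in> space (PiM J M)" for x
    unfolding g_def by (rule bnd_integral[OF Pi hm[OF x] hK[OF x]])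
  show hd: "\<bar>f (x(i:=y)) - f (x(i:=y'))\<bar> \<le> c"
    if "x \<in> space (PiM J M)" "y \<in> space (M i)" "y' \<in> space (M i)" for x y y'
    by (rule bdd_diffD[OF fd upd_in_space_PiM[OF that(1,2)] upd_in_space_PiM[OF that(1,3)]]) auto
  show "bdd_diff M J g c"
  proof (rule bdd_diffI)
    fix x x' j assume x: "x \<in> space (PiM J M)" and x': "x' \<in> space (PiM J M)" and j: "j \<in> J"
      and eq: "\<And>j'. j' \<in> J \<Longrightarrow> j' \<noteq> j \<Longrightarrow> x j' = x' j'"
    have d: "\<bar>f (x(i:=y)) - f (x'(i:=y))\<bar> \<le> c" if y: "y \<in> space (M i)" for y
      by (rule bdd_diffD[where i=j, OF fd upd_in_space_PiM[OF x y] upd_in_space_PiM[OF x' y]]) (use j eq J(2) in auto)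
    have i1: "integrable (M i) (\<lambda>y. f (x(i:=y)))"
      by (rule bnd_int[OF Pi hm[OF x] hK[OF x]])
    have i2: "integrable (M i) (\<lambda>y. f (x'(i:=y)))"
      by (rule bnd_int[OF Pi hm[OF x'] hK[OF x']])
    have "g x - g x' = integral\<^sup>L (M i) (\<lambda>y. f (x(i:=y)) - f (x'(i:=y)))"
      unfolding g_def using i1 i2 by simp
    also have "\<bar>\<dots>\<bar> \<le> c"
      by (rule bnd_integral[OF Pi _ d]) (use hm[OF x] hm[OF x'] in simp)
    finally show "\<bar>g x - g x'\<bar> \<le> c" .
  qed
  have "integrable (PiM (insert i J) M) f"
    by (rule bnd_int[OF PIJ fm fK])
  then show "integral\<^sup>L (PiM (insert i J) M) f = integral\<^sup>L (PiM J M) g"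
    unfolding g_def by (rule product_integral_insert[OF J])
qed

end

context product_prob_space
begin

lemma PiM_empty_integral: "integral\<^sup>L (PiM {} M) f = f (\<lambda>_. undefined)"
  by (simp add: PiM_empty lebesgue_integral_count_space_finite)

lemma PiM_empty_nn_integral: "integral\<^sup>N (PiM {} M) f = f (\<lambda>_. undefined)"
  by (simp add: PiM_empty nn_integral_count_space_finite)

lemma bdd_diff_var:
  fixes c K :: real
  assumes "finite J"
  shows "f \<in> borel_measurable (PiM J M) \<Longrightarrow> (\<forall>x\<in>space (PiM J M). \<bar>f x\<bar> \<le> K)
    \<Longrightarrow> bdd_diff M J f c
    \<Longrightarrow> integral\<^sup>L (PiM J M) (\<lambda>x. (f x)\<^sup>2) \<le> (integral\<^sup>L (PiM J M) f)\<^sup>2 + card J * c\<^sup>2"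
  using assms
proof (induction J arbitrary: f K rule: finite_induct)
  case empty
  then show ?case by (simp add: PiM_empty_integral)
next
  case (insert i J)
  define g where "g x = (\<integral>y. f (x(i:=y)) \<partial>M i)" for x
  have fK: "\<And>x. x \<in> space (PiM (insert i J) M) \<Longrightarrow> \<bar>f x\<bar> \<le> K" using insert.prems(2) by blast
  note st = bdd_diff_step[OF insert(1,2) insert.prems, folded g_def]
  have st2: "\<forall>x\<in>space (PiM J M). \<bar>g x\<bar> \<le> K" using st(2) by blast
  interpret Mi: prob_space "M i" by (rule prob_space)
  have Mfin: "finite_measure (M i)" by (rule prob_space.axioms(1)[OF prob_space])
  note Mi_icb = finite_measure.integrable_const_bound[OF Mfin]
  have Mi1: "measure (M i) (space (M i)) = 1" by (rule prob_space.prob_space[OF prob_space])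
  interpret PJ: prob_space "PiM J M" by (rule prob_space_PiM) (rule prob_space)
  interpret PIJ: prob_space "PiM (insert i J) M" by (rule prob_space_PiM) (rule prob_space)
  have fK: "\<And>x. x \<in> space (PiM (insert i J) M) \<Longrightarrow> \<bar>f x\<bar> \<le> K" using insert.prems(2) by blast
  have f2m: "(\<lambda>x. (f x)\<^sup>2) \<in> borel_measurable (PiM (insert i J) M)" using insert.prems(1) by simp
  have f2int: "integrable (PiM (insert i J) M) (\<lambda>x. (f x)\<^sup>2)"
    by (rule PIJ.integrable_const_bound[where B="K\<^sup>2"])
       (use f2m in \<open>auto intro!: AE_I2 sq_le sq_le' fK\<close>)
  have fm2: "(\<lambda>(x, y). (f (x(i:=y)))\<^sup>2) \<in> borel_measurable (PiM J M \<Otimes>\<^sub>M M i)"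
    using measurable_comp[OF measurable_add_dim f2m] by (simp add: comp_def case_prod_unfold)
  have im: "(\<lambda>x. \<integral>y. (f (x(i:=y)))\<^sup>2 \<partial>M i) \<in> borel_measurable (PiM J M)"
    using sigma_finite_measure.borel_measurable_lebesgue_integral[OF sigma_finite_measures[of i], of "\<lambda>x y. (f (x(i:=y)))\<^sup>2" "PiM J M"] fm2
    by simp
  have inner: "(\<integral>y. (f (x(i:=y)))\<^sup>2 \<partial>M i) \<le> (g x)\<^sup>2 + c\<^sup>2" if x: "x \<in> space (PiM J M)" for x
    unfolding g_def
    by (rule single_var(2)[OF prob_space[of i] st(4)[OF x] st(5)[OF x] st(6)[OF x]])
  have innerK: "\<bar>\<integral>y. (f (x(i:=y)))\<^sup>2 \<partial>M i\<bar> \<le> K\<^sup>2" if x: "x \<in> space (PiM J M)" for x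
  proof -
    have "(\<integral>y. (f (x(i:=y)))\<^sup>2 \<partial>M i) \<le> (\<integral>y. K\<^sup>2 \<partial>M i)"
    proof (rule integral_mono)
      show "integrable (M i) (\<lambda>y. (f (x(i:=y)))\<^sup>2)"
        by (rule Mi_icb[where B="K\<^sup>2"]) (auto intro!: AE_I2 sq_le sq_le' st(5)[OF x] borel_measurable_power st(4)[OF x])
    qed (auto intro!: sq_le' st(5)[OF x])
    moreover have "0 \<le> (\<integral>y. (f (x(i:=y)))\<^sup>2 \<partial>M i)" by simp
    ultimately show ?thesis by (simp add: Mi1)
  qed
  have gint: "integrable (PiM J M) g"
    by (rule PJ.integrable_const_bound[where B=K]) (auto intro!: AE_I2 st(1) st(2))
  have g2int: "integrable (PiM J M) (\<lambda>x. (g x)\<^sup>2)"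
    by (rule PJ.integrable_const_bound[where B="K\<^sup>2"])
       (use st(1) in \<open>auto intro!: AE_I2 sq_le sq_le' st(2)\<close>)
  have "integral\<^sup>L (PiM (insert i J) M) (\<lambda>x. (f x)\<^sup>2) = (\<integral>x. (\<integral>y. (f (x(i:=y)))\<^sup>2 \<partial>M i) \<partial>PiM J M)"
    by (rule product_integral_insert[OF insert(1,2) f2int])
  also have "\<dots> \<le> (\<integral>x. (g x)\<^sup>2 + c\<^sup>2 \<partial>PiM J M)"
  proof (rule integral_mono)
    show "integrable (PiM J M) (\<lambda>x. \<integral>y. (f (x(i:=y)))\<^sup>2 \<partial>M i)"
      by (rule PJ.integrable_const_bound[where B="K\<^sup>2"]) (auto intro!: AE_I2 im order_trans[OF abs_ge_self innerK])
    show "integrable (PiM J M) (\<lambda>x. (g x)\<^sup>2 + c\<^sup>2)" using g2int by simp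
  qed (rule inner)
  also have "\<dots> = (\<integral>x. (g x)\<^sup>2 \<partial>PiM J M) + c\<^sup>2"
    by (subst Bochner_Integration.integral_add[OF g2int]) (auto simp: PJ.prob_space)
  also have "\<dots> \<le> (integral\<^sup>L (PiM J M) g)\<^sup>2 + card J * c\<^sup>2 + c\<^sup>2"
    by (rule add_right_mono) (rule insert.IH[OF st(1) st2 st(3)])
  also have "\<dots> = (integral\<^sup>L (PiM (insert i J) M) f)\<^sup>2 + card (insert i J) * c\<^sup>2"
    by (simp only: st(7) card_insert_disjoint[OF insert(1,2)]) (simp add: algebra_simps)
  finally show ?case .
qed

lemma bdd_diff_mgf:
  fixes c K :: real
  assumes "finite J" and l: "l > 0"
  shows "f \<in> borel_measurable (PiM J M) \<Longrightarrow> (\<forall>x\<in>space (PiM J M). \<bar>f x\<bar> \<le> K)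
    \<Longrightarrow> bdd_diff M J f c
    \<Longrightarrow> (\<integral>\<^sup>+x. ennreal (exp (l * f x)) \<partial>PiM J M)
         \<le> ennreal (exp (l * integral\<^sup>L (PiM J M) f)) * ennreal (exp (l\<^sup>2 * card J * c\<^sup>2 / 2))"
  using assms(1)
proof (induction J arbitrary: f K rule: finite_induct)
  case empty
  then show ?case by (simp add: PiM_empty_integral PiM_empty_nn_integral)
next
  case (insert i J)
  define g where "g x = (\<integral>y. f (x(i:=y)) \<partial>M i)" for x
  have fK: "\<And>x. x \<in> space (PiM (insert i J) M) \<Longrightarrow> \<bar>f x\<bar> \<le> K" using insert.prems(2) by blast
  note st = bdd_diff_step[OF insert(1,2) insert.prems, folded g_def]
  have st2: "\<forall>x\<in>space (PiM J M). \<bar>g x\<bar> \<le> K" using st(2) by blast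
  interpret Mi: prob_space "M i" by (rule prob_space)
  have "(\<integral>\<^sup>+x. ennreal (exp (l * f x)) \<partial>PiM (insert i J) M)
      = (\<integral>\<^sup>+x. (\<integral>\<^sup>+y. ennreal (exp (l * f (x(i:=y)))) \<partial>M i) \<partial>PiM J M)"
    by (rule product_nn_integral_insert[OF insert(1,2)]) (use insert.prems(1) in simp)
  also have "\<dots> \<le> (\<integral>\<^sup>+x. ennreal (exp (l * g x)) * ennreal (exp (l\<^sup>2 * c\<^sup>2 / 2)) \<partial>PiM J M)"
    by (rule nn_integral_mono, unfold g_def)
       (rule single_var(3)[OF prob_space[of i] st(4) st(5) st(6) l]; assumption)
  also have "\<dots> = (\<integral>\<^sup>+x. ennreal (exp (l * g x)) \<partial>PiM J M) * ennreal (exp (l\<^sup>2 * c\<^sup>2 / 2))"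
    by (rule nn_integral_multc) (use st(1) in simp)
  also have "\<dots> \<le> (ennreal (exp (l * integral\<^sup>L (PiM J M) g)) * ennreal (exp (l\<^sup>2 * card J * c\<^sup>2 / 2)))
                   * ennreal (exp (l\<^sup>2 * c\<^sup>2 / 2))"
    by (rule mult_right_mono[OF insert.IH[OF st(1) st2 st(3)]]) simp
  also have "\<dots> = ennreal (exp (l * integral\<^sup>L (PiM (insert i J) M) f)) * (ennreal (exp (l\<^sup>2 * card J * c\<^sup>2 / 2))
                   * ennreal (exp (l\<^sup>2 * c\<^sup>2 / 2)))"
    using st(7) by (simp only: mult.assoc)
  also have "ennreal (exp (l\<^sup>2 * card J * c\<^sup>2 / 2)) * ennreal (exp (l\<^sup>2 * c\<^sup>2 / 2))
      = ennreal (exp (l\<^sup>2 * card J * c\<^sup>2 / 2 + l\<^sup>2 * c\<^sup>2 / 2))"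
    by (subst exp_add, subst ennreal_mult) auto
  also have "l\<^sup>2 * card J * c\<^sup>2 / 2 + l\<^sup>2 * c\<^sup>2 / 2 = l\<^sup>2 * card (insert i J) * c\<^sup>2 / 2"
    using insert(1,2) by (simp add: field_simps)
  finally show ?case .
qed

end

lemma finite_nets:
  fixes S :: "'a::metric_space set"
  assumes "compact S"
  obtains F where "\<And>m. finite (F m)" "\<And>m. F m \<subseteq> S" "\<And>m. S \<subseteq> (\<Union>x\<in>F m. ball x (1 / Suc m))"
proof -
  have "\<forall>\<epsilon>>0. \<exists>k. finite k \<and> k \<subseteq> S \<and> S \<subseteq> (\<Union>x\<in>k. ball x \<epsilon>)"
    by (rule seq_compact_imp_totally_bounded[OF compact_imp_seq_compact[OF assms]])
  then have "\<forall>m. \<exists>k. finite k \<and> k \<subseteq> S \<and> S \<subseteq> (\<Union>x\<in>k. ball x (1 / Suc m))" by simp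
  then obtain F where "\<forall>m. finite (F m) \<and> F m \<subseteq> S \<and> S \<subseteq> (\<Union>x\<in>F m. ball x (1 / Suc m))"
    by metis
  then show ?thesis using that by blast
qed

lemma open_in_sets_borel_prod:
  fixes U :: "('a::metric_space \<times> 'b::metric_space) set"
  assumes ca: "compact (UNIV :: 'a set)" and cb: "compact (UNIV :: 'b set)" and U: "open U"
  shows "U \<in> sets (borel \<Otimes>\<^sub>M borel)"
proof -
  obtain Fa :: "nat \<Rightarrow> 'a set" where Fa: "\<And>m. finite (Fa m)" "\<And>m. UNIV \<subseteq> (\<Union>x\<in>Fa m. ball x (1 / Suc m))"
    using finite_nets[OF ca] by metis
  obtain Fb :: "nat \<Rightarrow> 'b set" where Fb: "\<And>m. finite (Fb m)" "\<And>m. UNIV \<subseteq> (\<Union>x\<in>Fb m. ball x (1 / Suc m))"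
    using finite_nets[OF cb] by metis
  define r where "r m = 1 / real (Suc m)" for m
  define Q where "Q = {(m, a, b). a \<in> Fa m \<and> b \<in> Fb m \<and> ball a (r m) \<times> ball b (r m) \<subseteq> U}"
  define R where "R = (\<lambda>(m, a, b). ball a (r m) \<times> ball b (r m)) ` Q"
  have "Q \<subseteq> Sigma UNIV (\<lambda>m. Fa m \<times> Fb m)" unfolding Q_def by auto
  moreover have "countable (Sigma UNIV (\<lambda>m. Fa m \<times> Fb m))"
    by (rule countable_SIGMA) (auto intro!: countable_finite simp: Fa Fb)
  ultimately have cQ: "countable Q" by (rule countable_subset)
  have cR: "countable R" unfolding R_def using cQ by simp
  have RU: "U = \<Union>R"
  proof
    show "\<Union>R \<subseteq> U" unfolding R_def Q_def by auto
    show "U \<subseteq> \<Union>R"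
    proof
      fix z assume z: "z \<in> U"
      obtain x y where zxy: "z = (x, y)" by (cases z)
      obtain e where e: "e > 0" "\<And>w. dist w z < e \<Longrightarrow> w \<in> U"
        using U z unfolding open_dist by metis
      obtain m where m: "1 / real (Suc m) < e / 4"
        using e(1) by (metis divide_pos_pos nat_approx_posE zero_less_numeral)
      obtain a where a: "a \<in> Fa m" "x \<in> ball a (r m)" using Fa(2)[of m] unfolding r_def by blast
      obtain b where b: "b \<in> Fb m" "y \<in> ball b (r m)" using Fb(2)[of m] unfolding r_def by blast
      have sub: "ball a (r m) \<times> ball b (r m) \<subseteq> U"
      proof safe
        fix x' y' assume x': "x' \<in> ball a (r m)" and y': "y' \<in> ball b (r m)"
        have dx: "dist x' x < 2 * r m"
          using x' a(2) dist_triangle[of x' x a] by (simp add: dist_commute)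
        have dy: "dist y' y < 2 * r m"
          using y' b(2) dist_triangle[of y' y b] by (simp add: dist_commute)
        have "dist (x', y') z = sqrt ((dist x' x)\<^sup>2 + (dist y' y)\<^sup>2)"
          by (simp add: zxy dist_Pair_Pair)
        also have "\<dots> \<le> dist x' x + dist y' y"
          by (rule sqrt_sum_squares_le_sum) auto
        also have "\<dots> < 4 * r m" using dx dy by simp
        also have "\<dots> < e" using m unfolding r_def by simp
        finally show "(x', y') \<in> U" by (rule e(2))
      qed
      have "(m, a, b) \<in> Q" unfolding Q_def using a b sub by auto
      moreover have "z \<in> ball a (r m) \<times> ball b (r m)" using a b zxy by auto
      ultimately show "z \<in> \<Union>R" unfolding R_def by force
    qed
  qed
  have "R \<subseteq> sets (borel \<Otimes>\<^sub>M borel)"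
    unfolding R_def by (auto intro!: pair_measureI)
  then show ?thesis
    unfolding RU by (intro sets.countable_Union cR) auto
qed

lemma continuous_borel_prod_measurable:
  fixes C :: "('a::metric_space \<times> 'b::metric_space) \<Rightarrow> 'c::topological_space"
  assumes ca: "compact (UNIV :: 'a set)" and cb: "compact (UNIV :: 'b set)"
    and C: "continuous_on UNIV C"
  shows "C \<in> borel_measurable (borel \<Otimes>\<^sub>M borel)"
proof (rule borel_measurableI)
  fix S :: "'c set" assume "open S"
  then have "open (C -` S)" by (rule open_vimage[OF _ C])
  then show "C -` S \<inter> space (borel \<Otimes>\<^sub>M borel) \<in> sets (borel \<Otimes>\<^sub>M borel)"
    using open_in_sets_borel_prod[OF ca cb] by (simp add: space_pair_measure)
qed

lemma norm_sq_vec: "(norm (x :: real^'s))\<^sup>2 = (\<Sum>k\<in>UNIV. (x $ k)\<^sup>2)"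
  unfolding norm_vec_def L2_set_def by (simp add: sum_nonneg)

lemma sq_expand:
  fixes X :: "'b \<Rightarrow> real"
  assumes "prob_space N" "integrable N X" "integrable N (\<lambda>x. (X x)\<^sup>2)"
  shows "integral\<^sup>L N (\<lambda>x. (X x - a)\<^sup>2) = integral\<^sup>L N (\<lambda>x. (X x)\<^sup>2) - 2 * a * integral\<^sup>L N X + a\<^sup>2"
proof -
  interpret prob_space N by fact
  have "integral\<^sup>L N (\<lambda>x. (X x - a)\<^sup>2) = integral\<^sup>L N (\<lambda>x. ((X x)\<^sup>2 - 2 * a * X x) + a\<^sup>2)"
    by (rule Bochner_Integration.integral_cong) (simp_all add: power2_diff)
  also have "\<dots> = integral\<^sup>L N (\<lambda>x. (X x)\<^sup>2 - 2 * a * X x) + a\<^sup>2"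
    using assms by (subst Bochner_Integration.integral_add) (auto simp: prob_space)
  also have "integral\<^sup>L N (\<lambda>x. (X x)\<^sup>2 - 2 * a * X x) = integral\<^sup>L N (\<lambda>x. (X x)\<^sup>2) - 2 * a * integral\<^sup>L N X"
    using assms by (subst Bochner_Integration.integral_diff) auto
  finally show ?thesis .
qed

lemma chernoff:
  fixes N :: "'b \<Rightarrow> real"
  assumes P: "prob_space Q" and Nm: "N \<in> borel_measurable Q" and l: "l > 0"
    and mgf: "(\<integral>\<^sup>+x. ennreal (exp (l * N x)) \<partial>Q) \<le> ennreal (exp (l * m)) * ennreal (exp D)"
  shows "measure Q {x\<in>space Q. m + s \<le> N x} \<le> exp (- l * s + D)"
proof -
  interpret prob_space Q by fact
  let ?A = "{x\<in>space Q. m + s \<le> N x}"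
  have A: "?A \<in> sets Q" using Nm by measurable
  have "emeasure Q ?A = (\<integral>\<^sup>+x. indicator ?A x \<partial>Q)"
    using A by simp
  also have "\<dots> \<le> (\<integral>\<^sup>+x. ennreal (exp (- l * (m + s))) * ennreal (exp (l * N x)) \<partial>Q)"
  proof (rule nn_integral_mono)
    fix x assume x: "x \<in> space Q"
    show "indicator ?A x \<le> ennreal (exp (- l * (m + s))) * ennreal (exp (l * N x))"
    proof (cases "x \<in> ?A")
      case True
      then have "l * (m + s) \<le> l * N x" using l by (intro mult_left_mono) auto
      then have "0 \<le> - l * (m + s) + l * N x" by simp
      then have "1 \<le> exp (- l * (m + s) + l * N x)" by simp
      then have "1 \<le> exp (- l * (m + s)) * exp (l * N x)" by (simp only: exp_add)
      then have "ennreal 1 \<le> ennreal (exp (- l * (m + s)) * exp (l * N x))" by (rule ennreal_leI)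
      then show ?thesis using True by (simp add: ennreal_mult)
    qed simp
  qed
  also have "\<dots> = ennreal (exp (- l * (m + s))) * (\<integral>\<^sup>+x. ennreal (exp (l * N x)) \<partial>Q)"
    by (rule nn_integral_cmult) (use Nm in simp)
  also have "\<dots> \<le> ennreal (exp (- l * (m + s))) * (ennreal (exp (l * m)) * ennreal (exp D))"
    by (rule mult_left_mono[OF mgf]) simp
  also have "\<dots> = ennreal (exp (- l * (m + s)) * exp (l * m) * exp D)"
    by (simp add: ennreal_mult mult.assoc)
  also have "exp (- l * (m + s)) * exp (l * m) * exp D = exp (- l * s + D)"
    by (simp add: exp_add[symmetric] algebra_simps)
  finally have "ennreal (measure Q ?A) \<le> ennreal (exp (- l * s + D))"
    by (simp add: emeasure_eq_measure)
  then show ?thesis by (simp add: ennreal_le_iff)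
qed

lemma count_sum:
  assumes "m < n"
  shows "(\<Sum>i<n. \<Sum>j<n. ((if i = m then 1 else 0) + (if j = m then 1 else 0) :: real)) = 2 * real n"
proof -
  have "(\<Sum>i<n. \<Sum>j<n. ((if i = m then 1 else 0) + (if j = m then 1 else 0) :: real))
      = (\<Sum>i<n. (if i = m then real n else 0) + 1)"
    using assms by (intro sum.cong refl) (simp add: sum.distrib)
  also have "\<dots> = 2 * real n" using assms by (simp add: sum.distrib)
  finally show ?thesis .
qed

locale p10 =
  fixes \<alpha> :: "('a::metric_space) measure" and \<beta> :: "('b::metric_space) measure"
    and C :: "'a \<times> 'b \<Rightarrow> real^'s" and \<pi>h :: "('a \<times> 'b) measure" and p :: "'a \<times> 'b \<Rightarrow> real"
  assumes ca: "compact (UNIV :: 'a set)" and cb: "compact (UNIV :: 'b set)"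
    and Pa: "prob_space \<alpha>" and sa: "sets \<alpha> = sets borel"
    and Pb: "prob_space \<beta>" and sb: "sets \<beta> = sets borel"
    and Cc: "continuous_on UNIV C" and Cn: "\<And>z. norm (C z) \<le> 1"
    and coup: "is_coupling \<alpha> \<beta> \<pi>h"
    and pm: "p \<in> borel_measurable (\<alpha> \<Otimes>\<^sub>M \<beta>)" and pnn: "\<And>z. 0 \<le> p z" and pb: "bounded (range p)"
begin

definition "Bp = (SUP z. \<bar>p z\<bar>)"

lemma pB: "\<bar>p z\<bar> \<le> Bp"
proof -
  obtain a where a: "\<forall>x\<in>range p. norm x \<le> a" using pb unfolding bounded_iff by blast
  have "bdd_above (range (\<lambda>z. \<bar>p z\<bar>))"
    using a by (intro bdd_aboveI[where M=a]) auto
  then show ?thesis unfolding Bp_def using cSUP_upper[of z UNIV "\<lambda>z. \<bar>p z\<bar>"] by simp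
qed

lemma Bp_nonneg: "0 \<le> Bp"
  using pB[of undefined] by simp

lemma Ph: "prob_space \<pi>h" and sh: "sets \<pi>h = sets (\<alpha> \<Otimes>\<^sub>M \<beta>)"
    and dfst: "distr \<pi>h \<alpha> fst = \<alpha>" and dsnd: "distr \<pi>h \<beta> snd = \<beta>"
  using coup unfolding is_coupling_def by auto

lemma Pmu: "prob_space (\<alpha> \<Otimes>\<^sub>M \<beta>)"
  by (rule prob_space_pair[OF Pa Pb])

lemma Cm: "C \<in> borel_measurable (\<alpha> \<Otimes>\<^sub>M \<beta>)"
proof -
  have "sets (\<alpha> \<Otimes>\<^sub>M \<beta>) = sets (borel \<Otimes>\<^sub>M borel)"
    by (rule sets_pair_measure_cong[OF sa sb])
  then have "measurable (\<alpha> \<Otimes>\<^sub>M \<beta>) (borel :: (real^'s) measure) = measurable (borel \<Otimes>\<^sub>M borel) borel"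
    by (rule measurable_cong_sets) simp
  then show ?thesis using continuous_borel_prod_measurable[OF ca cb Cc] by simp
qed

lemma fst_meas: "fst \<in> measurable \<pi>h \<alpha>"
proof -
  have "measurable \<pi>h \<alpha> = measurable (\<alpha> \<Otimes>\<^sub>M \<beta>) \<alpha>" by (rule measurable_cong_sets[OF sh refl])
  then show ?thesis by simp
qed

lemma snd_meas: "snd \<in> measurable \<pi>h \<beta>"
proof -
  have "measurable \<pi>h \<beta> = measurable (\<alpha> \<Otimes>\<^sub>M \<beta>) \<beta>" by (rule measurable_cong_sets[OF sh refl])
  then show ?thesis by simp
qed

lemma PPi: "product_prob_space (\<lambda>_::nat. \<pi>h)"
  by (simp add: product_prob_space_def product_prob_space_axioms_def product_sigma_finite_def
      Ph prob_space_imp_sigma_finite)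

abbreviation "Pn n \<equiv> PiM {..<n} (\<lambda>_::nat. \<pi>h)"

lemma Pn_prob: "prob_space (Pn n)"
  by (rule prob_space_PiM) (rule Ph)

lemma F_meas:
  assumes "i < n" "j < n"
  shows "(\<lambda>\<omega>. (fst (\<omega> i), snd (\<omega> j))) \<in> measurable (Pn n) (\<alpha> \<Otimes>\<^sub>M \<beta>)"
proof (rule measurable_Pair)
  show "(\<lambda>\<omega>. fst (\<omega> i)) \<in> measurable (Pn n) \<alpha>"
    using measurable_comp[OF measurable_component_singleton[of i "{..<n}" "\<lambda>_. \<pi>h"] fst_meas] assms
    by (simp add: comp_def)
  show "(\<lambda>\<omega>. snd (\<omega> j)) \<in> measurable (Pn n) \<beta>"
    using measurable_comp[OF measurable_component_singleton[of j "{..<n}" "\<lambda>_. \<pi>h"] snd_meas] assms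
    by (simp add: comp_def)
qed

lemma term_meas:
  fixes g :: "'a \<times> 'b \<Rightarrow> 'c::{second_countable_topology, topological_space}"
  assumes "g \<in> borel_measurable (\<alpha> \<Otimes>\<^sub>M \<beta>)" "i < n" "j < n"
  shows "(\<lambda>\<omega>. g (fst (\<omega> i), snd (\<omega> j))) \<in> borel_measurable (Pn n)"
  using measurable_comp[OF F_meas[OF assms(2,3)] assms(1)] by (simp add: comp_def)

definition "T n \<omega> i j = (p (fst (\<omega> i), snd (\<omega> j)) / (real n)\<^sup>2) *\<^sub>R C (fst (\<omega> i), snd (\<omega> j))"

lemma V_eq: "Phi_hat_star_P C p n \<omega> = (\<Sum>i<n. \<Sum>j<n. T n \<omega> i j)"
  unfolding Phi_hat_star_P_def T_def ..

lemma T_meas: "i < n \<Longrightarrow> j < n \<Longrightarrow> (\<lambda>\<omega>. T n \<omega> i j) \<in> borel_measurable (Pn n)"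
  unfolding T_def
  by (intro borel_measurable_scaleR borel_measurable_divide borel_measurable_const term_meas pm Cm)

lemma V_meas: "Phi_hat_star_P C p n \<in> borel_measurable (Pn n)"
  unfolding V_eq by (intro borel_measurable_sum T_meas) auto

lemma T_norm: "norm (T n \<omega> i j) \<le> Bp / (real n)\<^sup>2"
proof -
  have "norm (T n \<omega> i j) = \<bar>p (fst (\<omega> i), snd (\<omega> j))\<bar> / (real n)\<^sup>2 * norm (C (fst (\<omega> i), snd (\<omega> j)))"
    unfolding T_def by simp
  also have "\<dots> \<le> Bp / (real n)\<^sup>2 * 1"
    by (intro mult_mono divide_right_mono pB Cn) (auto simp: Bp_nonneg)
  finally show ?thesis by simp
qed

lemma V_bound:
  assumes "n \<ge> 1"
  shows "norm (Phi_hat_star_P C p n \<omega>) \<le> Bp"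
proof -
  have "norm (Phi_hat_star_P C p n \<omega>) \<le> (\<Sum>i<n. norm (\<Sum>j<n. T n \<omega> i j))"
    unfolding V_eq by (rule norm_sum)
  also have "\<dots> \<le> (\<Sum>i<n. \<Sum>j<n. norm (T n \<omega> i j))"
    by (intro sum_mono norm_sum)
  also have "\<dots> \<le> (\<Sum>i<n. \<Sum>j<n. Bp / (real n)\<^sup>2)"
    by (intro sum_mono T_norm)
  also have "\<dots> = Bp" using assms by (simp add: power2_eq_square)
  finally show ?thesis .
qed

lemma V_diff:
  assumes mn: "m < n" and eq: "\<And>j. j < n \<Longrightarrow> j \<noteq> m \<Longrightarrow> \<omega> j = \<omega>' j"
  shows "norm (Phi_hat_star_P C p n \<omega> - Phi_hat_star_P C p n \<omega>') \<le> 4 * Bp / real n"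
proof -
  let ?w = "\<lambda>i j. ((if i = m then 1 else 0) + (if j = m then 1 else 0) :: real)"
  have "Phi_hat_star_P C p n \<omega> - Phi_hat_star_P C p n \<omega>' = (\<Sum>i<n. \<Sum>j<n. T n \<omega> i j - T n \<omega>' i j)"
    unfolding V_eq by (simp add: sum_subtractf)
  also have "norm \<dots> \<le> (\<Sum>i<n. norm (\<Sum>j<n. T n \<omega> i j - T n \<omega>' i j))"
    by (rule norm_sum)
  also have "\<dots> \<le> (\<Sum>i<n. \<Sum>j<n. norm (T n \<omega> i j - T n \<omega>' i j))"
    by (intro sum_mono norm_sum)
  also have "\<dots> \<le> (\<Sum>i<n. \<Sum>j<n. 2 * Bp / (real n)\<^sup>2 * ?w i j)"
  proof (intro sum_mono)
    fix i j assume i: "i \<in> {..<n}" and j: "j \<in> {..<n}"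
    show "norm (T n \<omega> i j - T n \<omega>' i j) \<le> 2 * Bp / (real n)\<^sup>2 * ?w i j"
    proof (cases "i = m \<or> j = m")
      case True
      have "norm (T n \<omega> i j - T n \<omega>' i j) \<le> norm (T n \<omega> i j) + norm (T n \<omega>' i j)"
        by (rule norm_triangle_ineq4)
      also have "\<dots> \<le> 2 * Bp / (real n)\<^sup>2" using T_norm[of n \<omega> i j] T_norm[of n \<omega>' i j] by simp
      also have "\<dots> \<le> 2 * Bp / (real n)\<^sup>2 * ?w i j"
      proof -
        have "1 \<le> ?w i j" using True by auto
        from mult_left_mono[OF this, of "2 * Bp / (real n)\<^sup>2"] Bp_nonneg show ?thesis by simp
      qed
      finally show ?thesis .
    next
      case False
      then have "\<omega> i = \<omega>' i" "\<omega> j = \<omega>' j" using eq i j by auto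
      then show ?thesis using False by (simp add: T_def)
    qed
  qed
  also have "\<dots> = 2 * Bp / (real n)\<^sup>2 * (\<Sum>i<n. \<Sum>j<n. ?w i j)"
    by (simp add: sum_distrib_left)
  also have "\<dots> = 4 * Bp / real n"
    using mn by (simp add: count_sum power2_eq_square)
  finally show ?thesis .
qed

end

context p10
begin

lemma offdiag:
  assumes ij: "i < n" "j < n" "i \<noteq> j" and g: "g \<in> borel_measurable (\<alpha> \<Otimes>\<^sub>M \<beta>)"
  shows "integral\<^sup>L (Pn n) (\<lambda>\<omega>. g (fst (\<omega> i), snd (\<omega> j))) = integral\<^sup>L (\<alpha> \<Otimes>\<^sub>M \<beta>) (g :: _ \<Rightarrow> real)"
proof -
  interpret PP: product_prob_space "\<lambda>_::nat. \<pi>h" "{..<n}" by (rule PPi)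
  let ?F = "\<lambda>\<omega>. (fst (\<omega> i), snd (\<omega> j))"
  have Fm: "?F \<in> measurable (Pn n) (\<alpha> \<Otimes>\<^sub>M \<beta>)" by (rule F_meas[OF ij(1,2)])
  have D: "\<alpha> \<Otimes>\<^sub>M \<beta> = distr (Pn n) (\<alpha> \<Otimes>\<^sub>M \<beta>) ?F"
  proof (rule pair_measure_eqI)
    show "sigma_finite_measure \<alpha>" by (rule prob_space_imp_sigma_finite[OF Pa])
    show "sigma_finite_measure \<beta>" by (rule prob_space_imp_sigma_finite[OF Pb])
    show "sets (\<alpha> \<Otimes>\<^sub>M \<beta>) = sets (distr (Pn n) (\<alpha> \<Otimes>\<^sub>M \<beta>) ?F)" by simp
    fix A B assume A: "A \<in> sets \<alpha>" and B: "B \<in> sets \<beta>"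
    define X where "X l = (if l = i then fst -` A \<inter> space \<pi>h else snd -` B \<inter> space \<pi>h)" for l
    have XA: "X i = fst -` A \<inter> space \<pi>h" and XB: "X j = snd -` B \<inter> space \<pi>h"
      using ij(3) by (auto simp: X_def)
    have Xs: "X l \<in> sets \<pi>h" for l
      unfolding X_def using measurable_sets[OF fst_meas A] measurable_sets[OF snd_meas B] by auto
    have "emeasure (distr (Pn n) (\<alpha> \<Otimes>\<^sub>M \<beta>) ?F) (A \<times> B) = emeasure (Pn n) (?F -` (A \<times> B) \<inter> space (Pn n))"
      by (rule emeasure_distr[OF Fm]) (use A B in auto)
    also have "?F -` (A \<times> B) \<inter> space (Pn n) = {\<omega>\<in>space (Pn n). \<forall>l\<in>{i,j}. \<omega> l \<in> X l}"
    proof (intro set_eqI iffI)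
      fix \<omega> assume "\<omega> \<in> ?F -` (A \<times> B) \<inter> space (Pn n)"
      then have w: "\<omega> \<in> space (Pn n)" "fst (\<omega> i) \<in> A" "snd (\<omega> j) \<in> B" by auto
      have "\<omega> i \<in> space \<pi>h" "\<omega> j \<in> space \<pi>h" using w(1) ij unfolding space_PiM by auto
      then show "\<omega> \<in> {\<omega>\<in>space (Pn n). \<forall>l\<in>{i,j}. \<omega> l \<in> X l}" using w by (simp add: XA XB)
    next
      fix \<omega> assume "\<omega> \<in> {\<omega>\<in>space (Pn n). \<forall>l\<in>{i,j}. \<omega> l \<in> X l}"
      then have "\<omega> \<in> space (Pn n)" "\<omega> i \<in> X i" "\<omega> j \<in> X j" by auto
      then show "\<omega> \<in> ?F -` (A \<times> B) \<inter> space (Pn n)" by (simp add: XA XB)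
    qed
    also have "emeasure (Pn n) \<dots> = (\<Prod>l\<in>{i,j}. emeasure \<pi>h (X l))"
      by (rule PP.emeasure_PiM_Collect) (use ij in \<open>simp_all add: Xs\<close>)
    also have "\<dots> = emeasure \<pi>h (X i) * emeasure \<pi>h (X j)" using ij(3) by simp
    also have "emeasure \<pi>h (X i) = emeasure \<alpha> A"
      unfolding XA using emeasure_distr[OF fst_meas A] dfst by simp
    also have "emeasure \<pi>h (X j) = emeasure \<beta> B"
      unfolding XB using emeasure_distr[OF snd_meas B] dsnd by simp
    finally show "emeasure \<alpha> A * emeasure \<beta> B = emeasure (distr (Pn n) (\<alpha> \<Otimes>\<^sub>M \<beta>) ?F) (A \<times> B)" ..
  qed
  have "integral\<^sup>L (\<alpha> \<Otimes>\<^sub>M \<beta>) g = integral\<^sup>L (distr (Pn n) (\<alpha> \<Otimes>\<^sub>M \<beta>) ?F) g"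
    by (subst D[symmetric]) simp
  also have "\<dots> = integral\<^sup>L (Pn n) (\<lambda>\<omega>. g (?F \<omega>))"
    by (rule integral_distr[OF Fm g])
  finally show ?thesis ..
qed

definition "gk k z = p z * C z $ k"

lemma Ck_meas: "(\<lambda>z. C z $ k) \<in> borel_measurable (\<alpha> \<Otimes>\<^sub>M \<beta>)"
  using borel_measurable_continuous_on[of "\<lambda>x::real^'s. x $ k", OF continuous_on_component[OF continuous_on_id] Cm]
  by simp

lemma gk_meas: "gk k \<in> borel_measurable (\<alpha> \<Otimes>\<^sub>M \<beta>)"
  unfolding gk_def by (intro borel_measurable_times pm Ck_meas)

lemma gk_bound: "\<bar>gk k z\<bar> \<le> Bp"
proof -
  have "\<bar>gk k z\<bar> = \<bar>p z\<bar> * \<bar>C z $ k\<bar>" unfolding gk_def by (simp add: abs_mult)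
  also have "\<dots> \<le> Bp * 1"
    by (intro mult_mono pB order_trans[OF component_le_norm_cart Cn]) (auto simp: Bp_nonneg)
  finally show ?thesis by simp
qed

lemma Phi_k: "Phi_star_density C (\<alpha> \<Otimes>\<^sub>M \<beta>) p $ k = integral\<^sup>L (\<alpha> \<Otimes>\<^sub>M \<beta>) (gk k)"
  unfolding Phi_star_density_def gk_def by simp

lemma Phi_k_bound: "\<bar>Phi_star_density C (\<alpha> \<Otimes>\<^sub>M \<beta>) p $ k\<bar> \<le> Bp"
  unfolding Phi_k by (rule bnd_integral[OF Pmu gk_meas gk_bound])

lemma Vk_eq: "Phi_hat_star_P C p n \<omega> $ k = (\<Sum>i<n. \<Sum>j<n. gk k (fst (\<omega> i), snd (\<omega> j)) / (real n)\<^sup>2)"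
  unfolding Phi_hat_star_P_def gk_def by (simp add: sum_component)

lemma EV_bound:
  assumes n: "n \<ge> 1"
  shows "\<bar>integral\<^sup>L (Pn n) (\<lambda>\<omega>. Phi_hat_star_P C p n \<omega> $ k) - Phi_star_density C (\<alpha> \<Otimes>\<^sub>M \<beta>) p $ k\<bar>
          \<le> 2 * Bp / real n"
proof -
  define e where "e i j = integral\<^sup>L (Pn n) (\<lambda>\<omega>. gk k (fst (\<omega> i), snd (\<omega> j)))" for i j
  let ?\<Phi> = "Phi_star_density C (\<alpha> \<Otimes>\<^sub>M \<beta>) p $ k"
  have tm: "(\<lambda>\<omega>. gk k (fst (\<omega> i), snd (\<omega> j))) \<in> borel_measurable (Pn n)" if "i < n" "j < n" for i j
    by (rule term_meas[OF gk_meas that])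
  have ti: "integrable (Pn n) (\<lambda>\<omega>. gk k (fst (\<omega> i), snd (\<omega> j)) / (real n)\<^sup>2)" if "i < n" "j < n" for i j
    by (rule bnd_int[OF Pn_prob, where K="Bp / (real n)\<^sup>2"])
       (use tm[OF that] gk_bound in \<open>auto simp: divide_right_mono\<close>)
  have "integral\<^sup>L (Pn n) (\<lambda>\<omega>. Phi_hat_star_P C p n \<omega> $ k)
      = (\<Sum>i<n. \<Sum>j<n. e i j / (real n)\<^sup>2)"
  proof -
    have "integral\<^sup>L (Pn n) (\<lambda>\<omega>. Phi_hat_star_P C p n \<omega> $ k)
        = (\<Sum>i<n. integral\<^sup>L (Pn n) (\<lambda>\<omega>. \<Sum>j<n. gk k (fst (\<omega> i), snd (\<omega> j)) / (real n)\<^sup>2))"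
      unfolding Vk_eq by (rule Bochner_Integration.integral_sum) (intro Bochner_Integration.integrable_sum ti; simp)
    also have "\<dots> = (\<Sum>i<n. \<Sum>j<n. integral\<^sup>L (Pn n) (\<lambda>\<omega>. gk k (fst (\<omega> i), snd (\<omega> j)) / (real n)\<^sup>2))"
      by (intro sum.cong refl Bochner_Integration.integral_sum ti) auto
    also have "\<dots> = (\<Sum>i<n. \<Sum>j<n. e i j / (real n)\<^sup>2)"
      unfolding e_def by (simp add: integral_divide_zero)
    finally show ?thesis .
  qed
  moreover have "?\<Phi> = (\<Sum>i<n. \<Sum>j<n. ?\<Phi> / (real n)\<^sup>2)"
    using n by (simp add: power2_eq_square)
  ultimately have "integral\<^sup>L (Pn n) (\<lambda>\<omega>. Phi_hat_star_P C p n \<omega> $ k) - ?\<Phi>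
      = (\<Sum>i<n. \<Sum>j<n. (e i j - ?\<Phi>) / (real n)\<^sup>2)"
    by (simp add: sum_subtractf diff_divide_distrib)
  also have "\<bar>\<dots>\<bar> \<le> (\<Sum>i<n. \<Sum>j<n. \<bar>(e i j - ?\<Phi>) / (real n)\<^sup>2\<bar>)"
    by (rule order_trans[OF sum_abs sum_mono]) (rule sum_abs)
  also have "\<dots> \<le> (\<Sum>i<n. \<Sum>j<n. (if j = i then 2 * Bp else 0) / (real n)\<^sup>2)"
  proof (intro sum_mono)
    fix i j assume i: "i \<in> {..<n}" and j: "j \<in> {..<n}"
    show "\<bar>(e i j - ?\<Phi>) / (real n)\<^sup>2\<bar> \<le> (if j = i then 2 * Bp else 0) / (real n)\<^sup>2"
    proof (cases "j = i")
      case True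
      have "\<bar>e i j\<bar> \<le> Bp" unfolding e_def
        by (rule bnd_integral[OF Pn_prob tm gk_bound]) (use i j in auto)
      then have "\<bar>e i j - ?\<Phi>\<bar> \<le> 2 * Bp" using Phi_k_bound[of k] by simp
      then show ?thesis using True by (simp add: divide_right_mono)
    next
      case False
      have "e i j = ?\<Phi>" unfolding e_def Phi_k
        by (rule offdiag) (use i j False in \<open>auto intro: gk_meas\<close>)
      then show ?thesis using False by simp
    qed
  qed
  also have "\<dots> = real n * (2 * Bp) / (real n)\<^sup>2"
    by (simp add: sum_divide_distrib[symmetric])
  also have "\<dots> = 2 * Bp / real n"
    by (simp add: power2_eq_square)
  finally show ?thesis .
qed

end

context p10
begin

abbreviation "Phi \<equiv> Phi_star_density C (\<alpha> \<Otimes>\<^sub>M \<beta>) p"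

lemma Vk_meas: "(\<lambda>\<omega>. Phi_hat_star_P C p n \<omega> $ k) \<in> borel_measurable (Pn n)"
  using borel_measurable_continuous_on[of "\<lambda>x::real^'s. x $ k", OF continuous_on_component[OF continuous_on_id] V_meas]
  by simp

lemma N_meas: "(\<lambda>\<omega>. norm (Phi_hat_star_P C p n \<omega> - Phi)) \<in> borel_measurable (Pn n)"
  using borel_measurable_continuous_on[of "\<lambda>x. norm (x - Phi)", OF _ V_meas]
  by (simp add: continuous_on_norm continuous_on_diff continuous_on_id continuous_on_const)

lemma sq_le_abs: "\<bar>a::real\<bar> \<le> K \<Longrightarrow> \<bar>a\<^sup>2\<bar> \<le> K\<^sup>2"
  using sq_le[of a K] by simp

lemma Vk_bdd_diff:
  assumes n: "n \<ge> 1"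
  shows "bdd_diff (\<lambda>_. \<pi>h) {..<n} (\<lambda>\<omega>. Phi_hat_star_P C p n \<omega> $ k) (4 * Bp / real n)"
proof (rule bdd_diffI)
  fix x y i assume "x \<in> space (Pn n)" "y \<in> space (Pn n)" and i: "i \<in> {..<n}"
    and eq: "\<And>j. j \<in> {..<n} \<Longrightarrow> j \<noteq> i \<Longrightarrow> x j = y j"
  have "\<bar>Phi_hat_star_P C p n x $ k - Phi_hat_star_P C p n y $ k\<bar>
      = \<bar>(Phi_hat_star_P C p n x - Phi_hat_star_P C p n y) $ k\<bar>" by simp
  also have "\<dots> \<le> norm (Phi_hat_star_P C p n x - Phi_hat_star_P C p n y)" by (rule component_le_norm_cart)
  also have "\<dots> \<le> 4 * Bp / real n" by (rule V_diff) (use i eq in auto)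
  finally show "\<bar>Phi_hat_star_P C p n x $ k - Phi_hat_star_P C p n y $ k\<bar> \<le> 4 * Bp / real n" .
qed

lemma N_bdd_diff:
  assumes n: "n \<ge> 1"
  shows "bdd_diff (\<lambda>_. \<pi>h) {..<n} (\<lambda>\<omega>. norm (Phi_hat_star_P C p n \<omega> - Phi)) (4 * Bp / real n)"
proof (rule bdd_diffI)
  fix x y i assume "x \<in> space (Pn n)" "y \<in> space (Pn n)" and i: "i \<in> {..<n}"
    and eq: "\<And>j. j \<in> {..<n} \<Longrightarrow> j \<noteq> i \<Longrightarrow> x j = y j"
  have "\<bar>norm (Phi_hat_star_P C p n x - Phi) - norm (Phi_hat_star_P C p n y - Phi)\<bar>
      \<le> norm ((Phi_hat_star_P C p n x - Phi) - (Phi_hat_star_P C p n y - Phi))"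
    by (rule norm_triangle_ineq3)
  also have "\<dots> = norm (Phi_hat_star_P C p n x - Phi_hat_star_P C p n y)" by simp
  also have "\<dots> \<le> 4 * Bp / real n" by (rule V_diff) (use i eq in auto)
  finally show "\<bar>norm (Phi_hat_star_P C p n x - Phi) - norm (Phi_hat_star_P C p n y - Phi)\<bar> \<le> 4 * Bp / real n" .
qed

lemma comp_sq_bound:
  assumes n: "n \<ge> 1"
  shows "integral\<^sup>L (Pn n) (\<lambda>\<omega>. (Phi_hat_star_P C p n \<omega> $ k - Phi $ k)\<^sup>2) \<le> 20 * Bp\<^sup>2 / real n"
proof -
  interpret PP: product_prob_space "\<lambda>_::nat. \<pi>h" UNIV by (rule PPi)
  let ?X = "\<lambda>\<omega>. Phi_hat_star_P C p n \<omega> $ k"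
  let ?a = "Phi $ k"
  have Xb: "\<bar>?X \<omega>\<bar> \<le> Bp" for \<omega>
    using order_trans[OF component_le_norm_cart V_bound[OF n]] by blast
  have Xi: "integrable (Pn n) ?X" by (rule bnd_int[OF Pn_prob Vk_meas Xb])
  have X2i: "integrable (Pn n) (\<lambda>\<omega>. (?X \<omega>)\<^sup>2)"
    by (rule bnd_int[OF Pn_prob borel_measurable_power[OF Vk_meas] sq_le_abs[OF Xb]])
  have var: "integral\<^sup>L (Pn n) (\<lambda>\<omega>. (?X \<omega>)\<^sup>2) \<le> (integral\<^sup>L (Pn n) ?X)\<^sup>2 + card {..<n} * (4 * Bp / real n)\<^sup>2"
    by (rule PP.bdd_diff_var[where K=Bp, OF _ Vk_meas _ Vk_bdd_diff[OF n]]) (auto intro: Xb)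
  have eb: "\<bar>integral\<^sup>L (Pn n) ?X - ?a\<bar> \<le> 2 * Bp / real n" by (rule EV_bound[OF n])
  have "(integral\<^sup>L (Pn n) ?X - ?a)\<^sup>2 \<le> (2 * Bp / real n)\<^sup>2" by (rule sq_le'[OF eb])
  also have "\<dots> = 4 * Bp\<^sup>2 / (real n * real n)" by (simp add: power2_eq_square)
  also have "\<dots> \<le> 4 * Bp\<^sup>2 / real n"
    using n by (intro divide_left_mono) (auto simp: Bp_nonneg)
  finally have eb2: "(integral\<^sup>L (Pn n) ?X - ?a)\<^sup>2 \<le> 4 * Bp\<^sup>2 / real n" .
  have "integral\<^sup>L (Pn n) (\<lambda>\<omega>. (?X \<omega> - ?a)\<^sup>2) = integral\<^sup>L (Pn n) (\<lambda>\<omega>. (?X \<omega>)\<^sup>2) - 2 * ?a * integral\<^sup>L (Pn n) ?X + ?a\<^sup>2"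
    by (rule sq_expand[OF Pn_prob Xi X2i])
  also have "\<dots> \<le> (integral\<^sup>L (Pn n) ?X - ?a)\<^sup>2 + card {..<n} * (4 * Bp / real n)\<^sup>2"
    using var by (simp add: power2_diff)
  also have "card {..<n} * (4 * Bp / real n)\<^sup>2 = 16 * Bp\<^sup>2 / real n"
    using n by (simp add: power2_eq_square)
  finally show ?thesis using eb2 by simp
qed

lemma part1:
  assumes n: "n \<ge> 1"
  shows "integral\<^sup>L (Pn n) (\<lambda>\<omega>. (norm (Phi_hat_star_P C p n \<omega> - Phi))\<^sup>2) \<le> real CARD('s) * (20 * Bp\<^sup>2) / real n"
proof -
  have "integral\<^sup>L (Pn n) (\<lambda>\<omega>. (norm (Phi_hat_star_P C p n \<omega> - Phi))\<^sup>2)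
      = integral\<^sup>L (Pn n) (\<lambda>\<omega>. \<Sum>k\<in>UNIV. (Phi_hat_star_P C p n \<omega> $ k - Phi $ k)\<^sup>2)"
    by (simp add: norm_sq_vec)
  also have "\<dots> = (\<Sum>k\<in>UNIV. integral\<^sup>L (Pn n) (\<lambda>\<omega>. (Phi_hat_star_P C p n \<omega> $ k - Phi $ k)\<^sup>2))"
  proof (rule Bochner_Integration.integral_sum)
    fix k :: 's
    have b: "\<bar>Phi_hat_star_P C p n \<omega> $ k - Phi $ k\<bar> \<le> 2 * Bp" for \<omega>
      using order_trans[OF component_le_norm_cart V_bound[OF n], of \<omega> k] Phi_k_bound[of k] by simp
    show "integrable (Pn n) (\<lambda>\<omega>. (Phi_hat_star_P C p n \<omega> $ k - Phi $ k)\<^sup>2)"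
      by (rule bnd_int[OF Pn_prob borel_measurable_power[OF borel_measurable_diff[OF Vk_meas borel_measurable_const]] sq_le_abs[OF b]])
  qed
  also have "\<dots> \<le> (\<Sum>k\<in>(UNIV::'s set). 20 * Bp\<^sup>2 / real n)"
    by (intro sum_mono comp_sq_bound[OF n])
  also have "\<dots> = real CARD('s) * (20 * Bp\<^sup>2) / real n" by simp
  finally show ?thesis .
qed

lemma EN_bound:
  assumes n: "n \<ge> 1"
  shows "integral\<^sup>L (Pn n) (\<lambda>\<omega>. norm (Phi_hat_star_P C p n \<omega> - Phi)) \<le> sqrt (real CARD('s) * (20 * Bp\<^sup>2)) / sqrt (real n)"
proof -
  let ?N = "\<lambda>\<omega>. norm (Phi_hat_star_P C p n \<omega> - Phi)"
  let ?m = "integral\<^sup>L (Pn n) ?N"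
  have Nb: "\<bar>?N \<omega>\<bar> \<le> Bp + norm Phi" for \<omega>
    using norm_triangle_ineq4[of "Phi_hat_star_P C p n \<omega>" Phi] V_bound[OF n, of \<omega>] by simp
  have Ni: "integrable (Pn n) ?N" by (rule bnd_int[OF Pn_prob N_meas Nb])
  have N2i: "integrable (Pn n) (\<lambda>\<omega>. (?N \<omega>)\<^sup>2)"
    by (rule bnd_int[OF Pn_prob borel_measurable_power[OF N_meas] sq_le_abs[OF Nb]])
  have "0 \<le> integral\<^sup>L (Pn n) (\<lambda>\<omega>. (?N \<omega> - ?m)\<^sup>2)" by simp
  also have "\<dots> = integral\<^sup>L (Pn n) (\<lambda>\<omega>. (?N \<omega>)\<^sup>2) - ?m\<^sup>2"
    by (subst sq_expand[OF Pn_prob Ni N2i]) (simp add: power2_eq_square)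
  finally have "?m\<^sup>2 \<le> real CARD('s) * (20 * Bp\<^sup>2) / real n" using part1[OF n] by simp
  then have "sqrt (?m\<^sup>2) \<le> sqrt (real CARD('s) * (20 * Bp\<^sup>2) / real n)" by (rule real_sqrt_le_mono)
  then show ?thesis by (simp add: real_sqrt_divide)
qed

lemma tail:
  assumes n: "n \<ge> 1" and l: "l > 0"
  shows "measure (Pn n) {\<omega>\<in>space (Pn n). integral\<^sup>L (Pn n) (\<lambda>\<omega>. norm (Phi_hat_star_P C p n \<omega> - Phi)) + s
              \<le> norm (Phi_hat_star_P C p n \<omega> - Phi)}
         \<le> exp (- l * s + l\<^sup>2 * real n * (4 * Bp / real n)\<^sup>2 / 2)"
proof -
  interpret PP: product_prob_space "\<lambda>_::nat. \<pi>h" UNIV by (rule PPi)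
  let ?N = "\<lambda>\<omega>. norm (Phi_hat_star_P C p n \<omega> - Phi)"
  have Nb: "\<bar>?N \<omega>\<bar> \<le> Bp + norm Phi" for \<omega>
    using norm_triangle_ineq4[of "Phi_hat_star_P C p n \<omega>" Phi] V_bound[OF n, of \<omega>] by simp
  have mgf: "(\<integral>\<^sup>+\<omega>. ennreal (exp (l * ?N \<omega>)) \<partial>Pn n)
      \<le> ennreal (exp (l * integral\<^sup>L (Pn n) ?N)) * ennreal (exp (l\<^sup>2 * card {..<n} * (4 * Bp / real n)\<^sup>2 / 2))"
    by (rule PP.bdd_diff_mgf[where K="Bp + norm Phi", OF _ l N_meas _ N_bdd_diff[OF n]]) (use Nb in \<open>auto simp del: norm_ge_zero\<close>)
  show ?thesis
    by (rule chernoff[OF Pn_prob N_meas l]) (use mgf in simp)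
qed

end

theorem proposition10:
  fixes \<alpha> :: "('a::metric_space) measure" and \<beta> :: "('b::metric_space) measure"
    and C :: "'a \<times> 'b \<Rightarrow> real^'s"
    and \<pi>hat :: "('a \<times> 'b) measure"
    and p :: "'a \<times> 'b \<Rightarrow> real"
  assumes "compact (UNIV :: 'a set)" and "compact (UNIV :: 'b set)"
    and "prob_space \<alpha>" and "sets \<alpha> = sets borel"
    and "prob_space \<beta>" and "sets \<beta> = sets borel"
    and "continuous_on UNIV C" and "\<And>z. norm (C z) \<le> 1"
    and "is_coupling \<alpha> \<beta> \<pi>hat"
    and "p \<in> borel_measurable (\<alpha> \<Otimes>\<^sub>M \<beta>)" and "\<And>z. 0 \<le> p z" and "bounded (range p)"
    and "is_coupling \<alpha> \<beta> (density (\<alpha> \<Otimes>\<^sub>M \<beta>) (\<lambda>z. ennreal (p z)))"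
  shows "(\<lambda>n. integral\<^sup>L (PiM {..<n} (\<lambda>_. \<pi>hat))
            (\<lambda>\<omega>. (norm (Phi_hat_star_P C p n \<omega> - Phi_star_density C (\<alpha> \<Otimes>\<^sub>M \<beta>) p))\<^sup>2))
         \<in> O(\<lambda>n. 1 / real n)
      \<and> (\<exists>c::real. \<forall>n::nat. \<forall>t::real. n \<ge> 1 \<longrightarrow> t > 0 \<longrightarrow>
           measure (PiM {..<n} (\<lambda>_. \<pi>hat))
             {\<omega> \<in> space (PiM {..<n} (\<lambda>_. \<pi>hat)).
                norm (Phi_hat_star_P C p n \<omega> - Phi_star_density C (\<alpha> \<Otimes>\<^sub>M \<beta>) p)
                  \<le> c * (1 + t) / sqrt (real n)}
           \<ge> 1 - 2 * exp (- 2 * t\<^sup>2 / (64 * (SUP z. \<bar>p z\<bar>)\<^sup>2)))"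
proof -
  interpret p10 \<alpha> \<beta> C \<pi>hat p
    by (rule p10.intro[OF assms(1-12)])
  have Bp_eq: "(SUP z. \<bar>p z\<bar>) = Bp" by (simp add: Bp_def)
  define K1 where "K1 = real CARD('s) * (20 * Bp\<^sup>2)"
  have K1_nonneg: "0 \<le> K1" unfolding K1_def by simp
  have P1: "(\<lambda>n. integral\<^sup>L (PiM {..<n} (\<lambda>_. \<pi>hat))
            (\<lambda>\<omega>. (norm (Phi_hat_star_P C p n \<omega> - Phi_star_density C (\<alpha> \<Otimes>\<^sub>M \<beta>) p))\<^sup>2))
         \<in> O(\<lambda>n. 1 / real n)"
  proof (rule bigoI[where c=K1])
    show "eventually (\<lambda>n. norm (integral\<^sup>L (PiM {..<n} (\<lambda>_. \<pi>hat))
            (\<lambda>\<omega>. (norm (Phi_hat_star_P C p n \<omega> - Phi_star_density C (\<alpha> \<Otimes>\<^sub>M \<beta>) p))\<^sup>2))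
          \<le> K1 * norm (1 / real n)) at_top"
      unfolding eventually_at_top_linorder
    proof (intro exI allI impI)
      fix n :: nat assume n: "n \<ge> 1"
      have nn: "0 \<le> integral\<^sup>L (Pn n) (\<lambda>\<omega>. (norm (Phi_hat_star_P C p n \<omega> - Phi))\<^sup>2)"
        by simp
      show "norm (integral\<^sup>L (Pn n) (\<lambda>\<omega>. (norm (Phi_hat_star_P C p n \<omega> - Phi))\<^sup>2))
          \<le> K1 * norm (1 / real n)"
        using part1[OF n] nn n unfolding K1_def by simp
    qed
  qed
  define c0 where "c0 = max 1 (sqrt K1)"
  have P2: "\<forall>n::nat. \<forall>t::real. n \<ge> 1 \<longrightarrow> t > 0 \<longrightarrow>
           measure (PiM {..<n} (\<lambda>_. \<pi>hat))
             {\<omega> \<in> space (PiM {..<n} (\<lambda>_. \<pi>hat)).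
                norm (Phi_hat_star_P C p n \<omega> - Phi_star_density C (\<alpha> \<Otimes>\<^sub>M \<beta>) p)
                  \<le> c0 * (1 + t) / sqrt (real n)}
           \<ge> 1 - 2 * exp (- 2 * t\<^sup>2 / (64 * (SUP z. \<bar>p z\<bar>)\<^sup>2))"
  proof (intro allI impI)
    fix n :: nat and t :: real assume n: "n \<ge> 1" and t: "t > 0"
    let ?N = "\<lambda>\<omega>. norm (Phi_hat_star_P C p n \<omega> - Phi)"
    let ?G = "{\<omega> \<in> space (Pn n). ?N \<omega> \<le> c0 * (1 + t) / sqrt (real n)}"
    interpret PN: prob_space "Pn n" by (rule Pn_prob)
    show "measure (Pn n) ?G \<ge> 1 - 2 * exp (- 2 * t\<^sup>2 / (64 * (SUP z. \<bar>p z\<bar>)\<^sup>2))"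
    proof (cases "Bp = 0")
      case True
      have g0: "0 \<le> measure (Pn n) ?G" by simp
      have "1 - 2 * exp (- 2 * t\<^sup>2 / (64 * Bp\<^sup>2)) = -1" using True by simp
      then show ?thesis unfolding Bp_eq using g0 by linarith
    next
      case False
      then have Bpos: "Bp > 0" using Bp_nonneg by simp
      define r where "r = sqrt (real n)"
      have rpos: "r > 0" unfolding r_def using n by simp
      have rsq: "real n = r\<^sup>2" unfolding r_def by simp
      define s where "s = t / r"
      define l where "l = t * r / (16 * Bp\<^sup>2)"
      have lpos: "l > 0" unfolding l_def using t rpos Bpos by simp
      let ?m = "integral\<^sup>L (Pn n) ?N"
      let ?Bd = "{\<omega>\<in>space (Pn n). ?m + s \<le> ?N \<omega>}"
      have tl: "measure (Pn n) ?Bd \<le> exp (- l * s + l\<^sup>2 * real n * (4 * Bp / real n)\<^sup>2 / 2)"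
        by (rule tail[OF n lpos])
      have ex: "- l * s + l\<^sup>2 * real n * (4 * Bp / real n)\<^sup>2 / 2 = - t\<^sup>2 / (32 * Bp\<^sup>2)"
      proof -
        have e1: "l * s = t\<^sup>2 / (16 * Bp\<^sup>2)"
          unfolding l_def s_def using rpos by (simp add: power2_eq_square)
        have "l\<^sup>2 * real n * (4 * Bp / real n)\<^sup>2 / 2 = (t * r / (16 * Bp\<^sup>2))\<^sup>2 * r\<^sup>2 * (4 * Bp / r\<^sup>2)\<^sup>2 / 2"
          unfolding l_def rsq ..
        also have "\<dots> = t\<^sup>2 / (32 * Bp\<^sup>2)"
          using rpos Bpos by (simp add: power2_eq_square power_mult_distrib)
        finally show ?thesis using e1 by simp
      qed
      have mb: "?m \<le> sqrt K1 / r"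
        using EN_bound[OF n] unfolding K1_def r_def by simp
      have "space (Pn n) - ?G \<subseteq> ?Bd"
      proof (rule subsetI)
        fix \<omega> assume "\<omega> \<in> space (Pn n) - ?G"
        then have w: "\<omega> \<in> space (Pn n)" and ng: "\<omega> \<notin> ?G" by auto
        then have "c0 * (1 + t) / r < ?N \<omega>" unfolding r_def by auto
        moreover have "?m + s \<le> c0 * (1 + t) / r"
        proof -
          have "sqrt K1 + t \<le> c0 * (1 + t)"
          proof -
            have c1: "sqrt K1 \<le> c0" "1 \<le> c0" unfolding c0_def by auto
            have "t \<le> c0 * t" using mult_right_mono[OF c1(2), of t] t by simp
            then show ?thesis using c1 by (simp add: distrib_left)
          qed
          then have "(sqrt K1 + t) / r \<le> c0 * (1 + t) / r" using rpos by (simp add: divide_right_mono)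
          then show ?thesis using mb unfolding s_def by (simp add: add_divide_distrib)
        qed
        ultimately show "\<omega> \<in> ?Bd" using w by simp
      qed
      moreover have "?Bd \<in> sets (Pn n)" using N_meas by measurable
      moreover have Gs: "?G \<in> sets (Pn n)" using N_meas by measurable
      ultimately have "measure (Pn n) (space (Pn n) - ?G) \<le> measure (Pn n) ?Bd"
        by (intro PN.finite_measure_mono) auto
      then have "1 - measure (Pn n) ?G \<le> exp (- t\<^sup>2 / (32 * Bp\<^sup>2))"
        using tl ex PN.prob_compl[OF Gs] by simp
      moreover have "exp (- 2 * t\<^sup>2 / (64 * Bp\<^sup>2)) = exp (- t\<^sup>2 / (32 * Bp\<^sup>2))" by simp
      ultimately show ?thesis unfolding Bp_eq
        using exp_gt_zero[of "- t\<^sup>2 / (32 * Bp\<^sup>2)"] by linarith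
    qed
  qed
  show ?thesis using P1 P2 by blast
qed


end
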